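(* Let $A$ be a VPA. The languages $S_0=\sigma_0(D)$ and $S_1=\sigma_1(W\setminus\{\varepsilon\})$ are context-free.
   Context: VPA $A=(Q,\Sigma,\Gamma,\bot,q_0,\delta,F)$ over a pushdown alphabet $\Sigma=\Sigma_c\cup\Sigma_r\cup\Sigma_{\mathit{int}}$ (deterministic; call letters push a symbol of $\Gamma\setminus\{\bot\}$, internal letters change only the state, return letters pop the top symbol $\gamma\ne\bot$ and use it, or read $\bot$ without popping); configurations $\alpha q$, $\alpha\in\bot(\Gamma\setminus\{\bot\})^*$; $\delta(c,w)$ the configuration reached from $c$ on $w$; $\mathcal L(c)$ the set of words leading from $c$ to a state in $F$. Well-matched words $W$: smallest set containing $\varepsilon$ and $\Sigma_{\mathit{int}}$, closed under concatenation and under $w\mapsto awb$ ($a\in\Sigma_c$, $b\in\Sigma_r$). Descending words $D$: words factorizable into well-matched factors and return letters. $\varphi:W\to Q^Q$ is the homomorphism with $\delta(\alpha p,w)=\alpha\,\varphi(w)(p)$. $\mathrm{rConf}$: configurations reachable from $\bot q_0$; $\mathsf{rep}(c)$: length-lexicographically least (for fixed linear orders on $\Gamma,Q$) $c'\in\mathrm{rConf}$ with $\mathcal L(c')=\mathcal L(c)$; $\nu_A(w)=\mathsf{rep}(\delta(\bot q_0,w))$. For $w=a_1\cdots a_n\in D$ each suffix is descending and $\nu_A(a_i\cdots a_n)=\bot q_i$ for some $q_i\in Q$; $\sigma_0(w)=q_1\cdots q_n\in Q^*$; for nonempty $w\in W$, $\sigma_1(w)=\varphi(w)q_2\cdots q_n$,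 a word over the alphabet $Q\cup Q^Q$. *)

theory Defs
  imports Main
begin

datatype ('c, 'r, 'i) psym = Call 'c | Ret 'r | Intl 'i

text \<open>States Q = UNIV :: 'q, the stack alphabet without bottom Gamma - {bot} = UNIV :: 'g.
  A configuration (alpha, q) stands for bot alpha q, where alpha is listed from
  bottom to top (the last element is the top of the stack).
  Return transitions get Some gamma for top symbol gamma, None for reading bot.\<close>
record ('q, 'g, 'c, 'r, 'i) vpa =
  init :: 'q
  fin  :: "'q set"
  dcall :: "'q \<Rightarrow> 'c \<Rightarrow> 'q \<times> 'g"
  dret  :: "'q \<Rightarrow> 'r \<Rightarrow> 'g option \<Rightarrow> 'q"
  dint  :: "'q \<Rightarrow> 'i \<Rightarrow> 'q"

type_synonym ('g, 'q) conf = "'g list \<times> 'q"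

fun step :: "('q, 'g, 'c, 'r, 'i, 'z) vpa_scheme \<Rightarrow> ('g, 'q) conf \<Rightarrow> ('c, 'r, 'i) psym \<Rightarrow> ('g, 'q) conf" where
  "step A (al, p) (Call a) = (let (q, g) = dcall A p a in (al @ [g], q))"
| "step A (al, p) (Intl a) = (al, dint A p a)"
| "step A (al, p) (Ret b) =
     (if al = [] then (al, dret A p b None) else (butlast al, dret A p b (Some (last al))))"

definition delta :: "('q, 'g, 'c, 'r, 'i, 'z) vpa_scheme \<Rightarrow> ('g, 'q) conf \<Rightarrow> ('c, 'r, 'i) psym list \<Rightarrow> ('g, 'q) conf" where
  "delta A c w = foldl (step A) c w"

definition lang :: "('q, 'g, 'c, 'r, 'i, 'z) vpa_scheme \<Rightarrow> ('g, 'q) conf \<Rightarrow> ('c, 'r, 'i) psym list set" where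
  "lang A c = {w. snd (delta A c w) \<in> fin A}"

definition rConf :: "('q, 'g, 'c, 'r, 'i, 'z) vpa_scheme \<Rightarrow> ('g, 'q) conf set" where
  "rConf A = {delta A ([], init A) w | w. True}"

text \<open>Length-lexicographic order on configurations, read as words bot alpha q
  over Gamma \<union> Q, using the given linear orders on 'g and 'q.\<close>
definition llex_le :: "('g::linorder, 'q::linorder) conf \<Rightarrow> ('g, 'q) conf \<Rightarrow> bool" where
  "llex_le c d \<longleftrightarrow>
     length (fst c) < length (fst d)
   \<or> (length (fst c) = length (fst d) \<and> (fst c, fst d) \<in> lexord {(x, y). x < y})
   \<or> (fst c = fst d \<and> snd c \<le> snd d)"

definition rep :: "('q::linorder, 'g::linorder, 'c, 'r, 'i, 'z) vpa_scheme \<Rightarrow> ('g, 'q) conf \<Rightarrow> ('g, 'q) conf" where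
  "rep A c = (THE c'. c' \<in> rConf A \<and> lang A c' = lang A c \<and>
       (\<forall>c''\<in>rConf A. lang A c'' = lang A c \<longrightarrow> llex_le c' c''))"

definition nu :: "('q::linorder, 'g::linorder, 'c, 'r, 'i, 'z) vpa_scheme \<Rightarrow> ('c, 'r, 'i) psym list \<Rightarrow> ('g, 'q) conf" where
  "nu A w = rep A (delta A ([], init A) w)"

inductive_set WM :: "('c, 'r, 'i) psym list set" where
  WM_Nil: "[] \<in> WM"
| WM_Int: "[Intl i] \<in> WM"
| WM_app: "u \<in> WM \<Longrightarrow> v \<in> WM \<Longrightarrow> u @ v \<in> WM"
| WM_nest: "w \<in> WM \<Longrightarrow> [Call a] @ w @ [Ret b] \<in> WM"

inductive_set DW :: "('c, 'r, 'i) psym list set" where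
  DW_Nil: "[] \<in> DW"
| DW_WM: "u \<in> WM \<Longrightarrow> v \<in> DW \<Longrightarrow> u @ v \<in> DW"
| DW_Ret: "v \<in> DW \<Longrightarrow> Ret b # v \<in> DW"

definition phi :: "('q, 'g, 'c, 'r, 'i, 'z) vpa_scheme \<Rightarrow> ('c, 'r, 'i) psym list \<Rightarrow> 'q \<Rightarrow> 'q" where
  "phi A w = (\<lambda>p. THE q. \<forall>al. delta A (al, p) w = (al, q))"

text \<open>sigma_0(a_1...a_n) = q_1 ... q_n where nu(a_i ... a_n) = bot q_i.\<close>
definition sigma0 :: "('q::linorder, 'g::linorder, 'c, 'r, 'i, 'z) vpa_scheme \<Rightarrow> ('c, 'r, 'i) psym list \<Rightarrow> 'q list" where
  "sigma0 A w = map (\<lambda>i. snd (nu A (drop i w) :: ('g, 'q) conf)) [0..<length w]"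

text \<open>sigma_1(w) = phi(w) q_2 ... q_n over the alphabet Q \<union> Q^Q (encoded as a sum type).\<close>
definition sigma1 :: "('q::linorder, 'g::linorder, 'c, 'r, 'i, 'z) vpa_scheme \<Rightarrow> ('c, 'r, 'i) psym list \<Rightarrow> ('q + ('q \<Rightarrow> 'q)) list" where
  "sigma1 A w = Inr (phi A w) # map Inl (tl (sigma0 A w))"

definition S0 :: "('q::linorder, 'g::linorder, 'c, 'r, 'i, 'z) vpa_scheme \<Rightarrow> 'q list set" where
  "S0 A = sigma0 A ` DW"

definition S1 :: "('q::linorder, 'g::linorder, 'c, 'r, 'i, 'z) vpa_scheme \<Rightarrow> ('q + ('q \<Rightarrow> 'q)) list set" where
  "S1 A = sigma1 A ` (WM - {[]})"

datatype ('n, 't) gsym = NT 'n | Tm 't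

inductive derive1 :: "('n \<times> ('n, 't) gsym list) set \<Rightarrow> ('n, 't) gsym list \<Rightarrow> ('n, 't) gsym list \<Rightarrow> bool"
  for P where
  "(A, rhs) \<in> P \<Longrightarrow> derive1 P (u @ [NT A] @ v) (u @ rhs @ v)"

definition cfg_lang :: "('n \<times> ('n, 't) gsym list) set \<Rightarrow> 'n \<Rightarrow> 't list set" where
  "cfg_lang P S = {w. (derive1 P)\<^sup>*\<^sup>* [NT S] (map Tm w)}"

text \<open>A language is context-free iff generated by a finite context-free grammar
  (nonterminals taken from nat, without loss of generality).\<close>
definition context_free :: "'t list set \<Rightarrow> bool" where
  "context_free L \<longleftrightarrow> (\<exists>(P :: (nat \<times> (nat, 't) gsym list) set) S. finite P \<and> L = cfg_lang P S)"

end

theory Submission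
  imports Defs
begin

inductive_set WW :: "('c,'r,'i) psym list set" where
  WW_Nil: "[] \<in> WW"
| WW_Int: "w \<in> WW \<Longrightarrow> Intl a # w \<in> WW"
| WW_Call: "x \<in> WW \<Longrightarrow> w \<in> WW \<Longrightarrow> Call a # x @ Ret b # w \<in> WW"

inductive_set DD :: "('c,'r,'i) psym list set" where
  DD_Nil: "[] \<in> DD"
| DD_Ret: "d \<in> DD \<Longrightarrow> Ret b # d \<in> DD"
| DD_Int: "d \<in> DD \<Longrightarrow> Intl a # d \<in> DD"
| DD_Call: "x \<in> WW \<Longrightarrow> d \<in> DD \<Longrightarrow> Call a # x @ Ret b # d \<in> DD"

lemma WW_app: "u \<in> WW \<Longrightarrow> v \<in> WW \<Longrightarrow> u @ v \<in> WW"
  by (induction u rule: WW.induct) (simp_all add: WW.intros)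

lemma WM_WW: "WM = WW"
proof
  show "WM \<subseteq> WW"
  proof
    fix w assume "w \<in> WM" then show "w \<in> WW"
    proof (induction w rule: WM.induct)
      case WM_Nil then show ?case by (rule WW_Nil)
    next
      case (WM_Int i) show ?case by (rule WW_Int[OF WW_Nil])
    next
      case (WM_app u v) show ?case using WM_app.IH by (rule WW_app)
    next
      case (WM_nest w a b) then show ?case using WW_Call[OF _ WW_Nil] by simp
    qed
  qed
  show "WW \<subseteq> WM"
  proof
    fix w assume "w \<in> WW" then show "w \<in> WM"
    proof (induction w rule: WW.induct)
      case WW_Nil then show ?case by (rule WM_Nil)
    next
      case (WW_Int w a) then show ?case using WM_app[OF WM_Int] by fastforce
    next
      case (WW_Call x w a b) then show ?case using WM_app[OF WM_nest] by fastforce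
    qed
  qed
qed

lemma WW_DD_app: "u \<in> WW \<Longrightarrow> d \<in> DD \<Longrightarrow> u @ d \<in> DD"
  by (induction u rule: WW.induct) (simp_all add: DD.intros)

lemma DW_DD: "DW = DD"
proof
  show "DW \<subseteq> DD"
  proof
    fix w assume "w \<in> DW" then show "w \<in> DD"
      by (induction w rule: DW.induct) (simp_all add: DD.intros WW_DD_app WM_WW)
  qed
  show "DD \<subseteq> DW"
  proof
    fix w assume "w \<in> DD" then show "w \<in> DW"
    proof (induction w rule: DD.induct)
      case DD_Nil then show ?case by (rule DW_Nil)
    next
      case (DD_Ret d b) show ?case by (rule DW_Ret[OF DD_Ret.IH])
    next
      case (DD_Int d a) then show ?case using DW_WM[OF WM_Int] by fastforce
    next
      case (DD_Call x d a b) then show ?case using DW_WM[OF WM_nest] WM_WW by fastforce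
    qed
  qed
qed

lemma WW_DD: "x \<in> WW \<Longrightarrow> x \<in> DD"
  using WW_DD_app[OF _ DD_Nil] by simp

lemma DD_tl: "d \<in> DD \<Longrightarrow> tl d \<in> DD"
  by (induction d rule: DD.induct) (simp_all add: DD.intros WW_DD_app)

lemma delta_Nil[simp]: "delta A c [] = c" by (simp add: delta_def)
lemma delta_Cons[simp]: "delta A c (a # w) = delta A (step A c a) w" by (simp add: delta_def)
lemma delta_append: "delta A c (u @ v) = delta A (delta A c u) v" by (simp add: delta_def)

definition FF where "FF A w p = snd (delta A ([], p) w)"

definition rf where "rf A b p = dret A p b None"
definition ifn where "ifn A a p = dint A p a"
definition Cf where "Cf A a b e p = (case dcall A p a of (q, g) \<Rightarrow> dret A (e q) b (Some g))"

lemma delta_WW: "x \<in> WW \<Longrightarrow> delta A (al, p) x = (al, FF A x p)"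
proof (induction x arbitrary: al p rule: WW.induct)
  case WW_Nil then show ?case by (simp add: FF_def)
next
  case (WW_Int w a) then show ?case by (simp add: FF_def[of A "Intl a # w" p])
next
  case (WW_Call x w a b)
  obtain q g where qg: "dcall A p a = (q, g)" by force
  show ?case using WW_Call.IH qg by (simp add: FF_def[of A "Call a # x @ Ret b # w" p] delta_append)
qed

lemma FF_Nil: "FF A [] = id" by (auto simp: FF_def)
lemma FF_Ret: "FF A (Ret b # d) = FF A d \<circ> rf A b" by (auto simp: FF_def rf_def)
lemma FF_Int: "FF A (Intl a # d) = FF A d \<circ> ifn A a" by (auto simp: FF_def ifn_def)
lemma FF_Call: "x \<in> WW \<Longrightarrow> FF A (Call a # x @ Ret b # d) = FF A d \<circ> Cf A a b (FF A x)"
proof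
  fix p assume x: "x \<in> WW"
  obtain q g where qg: "dcall A p a = (q, g)" by force
  have "delta A ([], p) (Call a # x @ Ret b # d) = delta A ([g], q) (x @ Ret b # d)"
    using qg by simp
  also have "\<dots> = delta A (delta A ([g], q) x) (Ret b # d)" by (simp add: delta_append)
  also have "\<dots> = delta A ([g], FF A x q) (Ret b # d)" by (simp add: delta_WW[OF x])
  also have "\<dots> = delta A ([], dret A (FF A x q) b (Some g)) d" by simp
  finally show "FF A (Call a # x @ Ret b # d) p = (FF A d \<circ> Cf A a b (FF A x)) p"
    using qg by (simp add: FF_def Cf_def)
qed

lemma delta_DD: "d \<in> DD \<Longrightarrow> delta A ([], p) d = ([], FF A d p)"
proof (induction d arbitrary: p rule: DD.induct)
  case (DD_Call x d a b)
  obtain q g where qg: "dcall A p a = (q, g)" by force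
  show ?case using DD_Call.IH qg
    by (simp add: delta_WW[OF DD_Call.hyps(1)] FF_Call[OF DD_Call.hyps(1)] Cf_def delta_append)
qed (auto simp: FF_def)

lemma FF_app_DD: "u \<in> DD \<Longrightarrow> FF A (u @ v) p = FF A v (FF A u p)"
  unfolding FF_def[of A "u @ v"] by (simp add: delta_append delta_DD FF_def[of A v])

lemma phi_WW: "x \<in> WW \<Longrightarrow> phi A x = FF A x"
  unfolding phi_def by (rule ext, rule the_equality) (auto simp: delta_WW)

fun sm :: "('a list \<Rightarrow> 'b) \<Rightarrow> 'a list \<Rightarrow> 'b list" where
  "sm f [] = []"
| "sm f (a # w) = f (a # w) # sm f w"

lemma sm_append: "sm f (x @ v) = sm (\<lambda>s. f (s @ v)) x @ sm f v"
  by (induction x) auto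

lemma sm_cong_DD: "w \<in> DD \<Longrightarrow> (\<And>s. s \<in> DD \<Longrightarrow> f s = f' s) \<Longrightarrow> sm f w = sm f' w"
proof (induction w)
  case (Cons a w)
  have "w \<in> DD" using DD_tl[OF Cons.prems(1)] by simp
  then show ?case using Cons by simp
qed simp

lemma sm_drop: "map (\<lambda>i. f (drop i w)) [0..<length w] = sm f w"
proof (induction w arbitrary: f)
  case (Cons a w)
  have "[0..<length (a # w)] = 0 # map Suc [0..<length w]"
    by (simp del: upt_Suc add: map_Suc_upt upt_conv_Cons)
  then show ?case using Cons[of f] by (simp del: upt_Suc add: comp_def)
qed simp

definition out where "out A \<tau> k s = \<tau> (k (FF A s (init A)))"

lemma map_sm_out: "map h (sm (out A \<tau> k) w) = sm (out A (h \<circ> \<tau>) k) w"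
  by (induction w) (auto simp: out_def)

lemma sm_Call:
  assumes x: "x \<in> WW" and d: "d \<in> DD"
  shows "sm (out A \<tau> k) (x @ Ret b # d) =
    sm (out A \<tau> (k \<circ> FF A d \<circ> rf A b)) x @ \<tau> (k (FF A d (rf A b (init A)))) # sm (out A \<tau> k) d"
proof -
  have "sm (\<lambda>s. out A \<tau> k (s @ Ret b # d)) x = sm (out A \<tau> (k \<circ> FF A d \<circ> rf A b)) x"
    using WW_DD[OF x] by (rule sm_cong_DD) (simp add: out_def FF_app_DD FF_Ret)
  moreover have "sm (out A \<tau> k) (Ret b # d) = \<tau> (k (FF A d (rf A b (init A)))) # sm (out A \<tau> k) d"
    by (simp add: out_def FF_Ret)
  ultimately show ?thesis by (simp only: sm_append)
qed

fun ssem :: "('n \<Rightarrow> 't list set) \<Rightarrow> ('n, 't) gsym \<Rightarrow> 't list set" where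
  "ssem L (NT X) = L X"
| "ssem L (Tm t) = {[t]}"

fun Lsem :: "('n \<Rightarrow> 't list set) \<Rightarrow> ('n, 't) gsym list \<Rightarrow> 't list set" where
  "Lsem L [] = {[]}"
| "Lsem L (s # ss) = {u @ v | u v. u \<in> ssem L s \<and> v \<in> Lsem L ss}"

lemma Lsem_append: "Lsem L (x @ y) = {u @ v | u v. u \<in> Lsem L x \<and> v \<in> Lsem L y}"
proof (induction x)
  case Nil then show ?case by simp
next
  case (Cons s x)
  show ?case
  proof
    show "Lsem L ((s # x) @ y) \<subseteq> {u @ v |u v. u \<in> Lsem L (s # x) \<and> v \<in> Lsem L y}"
      using Cons by auto (metis (mono_tags, lifting) append.assoc)
    show "{u @ v |u v. u \<in> Lsem L (s # x) \<and> v \<in> Lsem L y} \<subseteq> Lsem L ((s # x) @ y)"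
      using Cons by auto (metis (mono_tags, lifting) append.assoc)
  qed
qed

lemma Lsem_single[simp]: "Lsem L [s] = ssem L s" by simp

lemma Lsem_Tm: "Lsem L (map Tm w) = {w}"
  by (induction w) auto

lemma Lsem_step:
  assumes snd: "\<forall>(X, r) \<in> P. Lsem L r \<subseteq> L X" and d: "derive1 P x y"
  shows "Lsem L y \<subseteq> Lsem L x"
  using d
proof cases
  case (1 X r u v)
  have "Lsem L r \<subseteq> Lsem L [NT X]" using snd 1 by auto
  then show ?thesis using 1 by (auto simp: Lsem_append) blast
qed

lemma Lsem_steps:
  assumes snd: "\<forall>(X, r) \<in> P. Lsem L r \<subseteq> L X" and d: "(derive1 P)\<^sup>*\<^sup>* x y"
  shows "Lsem L y \<subseteq> Lsem L x"
  using d by (induction rule: rtranclp_induct) (use Lsem_step[OF snd] in blast)+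

lemma cfg_sound:
  assumes snd: "\<forall>(X, r) \<in> P. Lsem L r \<subseteq> L X" and w: "w \<in> cfg_lang P S"
  shows "w \<in> L S"
  using Lsem_steps[OF snd, of "[NT S]" "map Tm w"] w by (simp add: cfg_lang_def Lsem_Tm)

lemma derive1_ctx: "derive1 P x y \<Longrightarrow> derive1 P (u @ x @ v) (u @ y @ v)"
proof (induction rule: derive1.induct)
  case (1 A rhs u' v')
  show ?case using derive1.intros[OF 1, of "u @ u'" "v' @ v"] by simp
qed

lemma rtc_ctx: "(derive1 P)\<^sup>*\<^sup>* x y \<Longrightarrow> (derive1 P)\<^sup>*\<^sup>* (u @ x @ v) (u @ y @ v)"
  by (induction rule: rtranclp_induct) (auto intro: rtranclp.rtrancl_into_rtrancl derive1_ctx)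

lemma rtc_app: "(derive1 P)\<^sup>*\<^sup>* x x' \<Longrightarrow> (derive1 P)\<^sup>*\<^sup>* y y' \<Longrightarrow> (derive1 P)\<^sup>*\<^sup>* (x @ y) (x' @ y')"
  using rtc_ctx[of P x x' "[]" y] rtc_ctx[of P y y' x' "[]"] by simp

lemma prod1: "(A, r) \<in> P \<Longrightarrow> derive1 P [NT A] r"
  using derive1.intros[of A r P "[]" "[]"] by simp

lemma rhs0: "(A, []) \<in> P \<Longrightarrow> (derive1 P)\<^sup>*\<^sup>* [NT A] (map Tm [])"
  using prod1 by fastforce

lemma rhs1: "(A, [NT Y]) \<in> P \<Longrightarrow> (derive1 P)\<^sup>*\<^sup>* [NT Y] (map Tm v) \<Longrightarrow> (derive1 P)\<^sup>*\<^sup>* [NT A] (map Tm v)"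
  using prod1 by (metis converse_rtranclp_into_rtranclp)

lemma rhs2: "(A, [Tm t, NT Y]) \<in> P \<Longrightarrow> (derive1 P)\<^sup>*\<^sup>* [NT Y] (map Tm v) \<Longrightarrow> (derive1 P)\<^sup>*\<^sup>* [NT A] (map Tm (t # v))"
proof -
  assume p: "(A, [Tm t, NT Y]) \<in> P" and d: "(derive1 P)\<^sup>*\<^sup>* [NT Y] (map Tm v)"
  have "(derive1 P)\<^sup>*\<^sup>* ([Tm t] @ [NT Y] @ []) ([Tm t] @ map Tm v @ [])" by (rule rtc_ctx[OF d])
  then show ?thesis using prod1[OF p] by (simp add: converse_rtranclp_into_rtranclp)
qed

lemma rhs4: "(A, [Tm t1, NT Y1, Tm t2, NT Y2]) \<in> P \<Longrightarrow> (derive1 P)\<^sup>*\<^sup>* [NT Y1] (map Tm u) \<Longrightarrow>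
   (derive1 P)\<^sup>*\<^sup>* [NT Y2] (map Tm v) \<Longrightarrow> (derive1 P)\<^sup>*\<^sup>* [NT A] (map Tm (t1 # u @ t2 # v))"
proof -
  assume p: "(A, [Tm t1, NT Y1, Tm t2, NT Y2]) \<in> P" and d1: "(derive1 P)\<^sup>*\<^sup>* [NT Y1] (map Tm u)"
    and d2: "(derive1 P)\<^sup>*\<^sup>* [NT Y2] (map Tm v)"
  have "(derive1 P)\<^sup>*\<^sup>* ([Tm t2] @ [NT Y2] @ []) ([Tm t2] @ map Tm v @ [])" by (rule rtc_ctx[OF d2])
  then have "(derive1 P)\<^sup>*\<^sup>* ([NT Y1] @ [Tm t2, NT Y2]) (map Tm u @ [Tm t2] @ map Tm v)"
    using rtc_app[OF d1] by simp
  then have "(derive1 P)\<^sup>*\<^sup>* ([Tm t1] @ ([NT Y1] @ [Tm t2, NT Y2]) @ []) ([Tm t1] @ (map Tm u @ [Tm t2] @ map Tm v) @ [])"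
    by (rule rtc_ctx)
  then show ?thesis using prod1[OF p] by (simp add: converse_rtranclp_into_rtranclp)
qed

fun gmap :: "('n \<Rightarrow> 'm) \<Rightarrow> ('n, 't) gsym \<Rightarrow> ('m, 't) gsym" where
  "gmap f (NT X) = NT (f X)"
| "gmap f (Tm t) = Tm t"

lemma derive1_map: "derive1 P x y \<Longrightarrow>
  derive1 ((\<lambda>(A, r). (f A, map (gmap f) r)) ` P) (map (gmap f) x) (map (gmap f) y)"
proof (induction rule: derive1.induct)
  case (1 A rhs u v)
  have "(f A, map (gmap f) rhs) \<in> (\<lambda>(A, r). (f A, map (gmap f) r)) ` P" using 1 by force
  from derive1.intros[OF this, of "map (gmap f) u" "map (gmap f) v"] show ?case by simp
qed

lemma rtc_map: "(derive1 P)\<^sup>*\<^sup>* x y \<Longrightarrow>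
  (derive1 ((\<lambda>(A, r). (f A, map (gmap f) r)) ` P))\<^sup>*\<^sup>* (map (gmap f) x) (map (gmap f) y)"
  by (induction rule: rtranclp_induct) (auto intro: rtranclp.rtrancl_into_rtrancl derive1_map)

lemma Lsem_map: "inj f \<Longrightarrow> Lsem (\<lambda>n. L (inv f n)) (map (gmap f) r) = Lsem L r"
proof (induction r)
  case (Cons s r)
  then show ?case by (cases s) auto
qed simp

lemma cf_intro:
  fixes P :: "('n::finite \<times> ('n, 't) gsym list) set"
  assumes fin: "finite P" and snd: "\<forall>(X, r) \<in> P. Lsem L r \<subseteq> L X"
    and cmp: "\<forall>w \<in> L S. (derive1 P)\<^sup>*\<^sup>* [NT S] (map Tm w)"
  shows "context_free (L S)"
proof -
  obtain f :: "'n \<Rightarrow> nat" and n where "f ` UNIV = {i. i < n}" and inj: "inj f"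
    using finite_imp_inj_to_nat_seg[of "UNIV :: 'n set"] by auto
  define P' where "P' = (\<lambda>(A, r). (f A, map (gmap f) r)) ` P"
  have finP': "finite P'" unfolding P'_def using fin by simp
  have "L S = cfg_lang P' (f S)"
  proof
    show "L S \<subseteq> cfg_lang P' (f S)"
    proof
      fix w assume "w \<in> L S"
      then have "(derive1 P)\<^sup>*\<^sup>* [NT S] (map Tm w)" using cmp by auto
      from rtc_map[OF this, of f] show "w \<in> cfg_lang P' (f S)"
        by (simp add: cfg_lang_def P'_def comp_def)
    qed
    show "cfg_lang P' (f S) \<subseteq> L S"
    proof
      fix w assume w: "w \<in> cfg_lang P' (f S)"
      have "\<forall>(X, r) \<in> P'. Lsem (\<lambda>n. L (inv f n)) r \<subseteq> L (inv f X)"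
      proof (clarsimp simp: P'_def Lsem_map[OF inj] inv_f_f[OF inj])
        fix a b x assume "(a, b) \<in> P" "x \<in> Lsem L b" then show "x \<in> L a" using snd by blast
      qed
      from cfg_sound[OF this w] show "w \<in> L S" by (simp add: inv_f_f[OF inj])
    qed
  qed
  then show ?thesis unfolding context_free_def using finP' by blast
qed

type_synonym 'q nt = "(('q \<Rightarrow> 'q) \<times> ('q \<Rightarrow> 'q) \<times> bool) option"

definition PG :: "('q, 'g, 'c, 'r, 'i, 'z) vpa_scheme \<Rightarrow> ('q \<Rightarrow> 't) \<Rightarrow> ('q nt \<times> ('q nt, 't) gsym list) set" where
"PG A \<tau> =
  (\<lambda>(k, fl). (Some (k, id, fl), [])) ` UNIV
 \<union> (\<lambda>(k, f, b). (Some (k, f \<circ> rf A b, True), [Tm (\<tau> (k (f (rf A b (init A))))), NT (Some (k, f, True))])) ` UNIV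
 \<union> (\<lambda>(k, f, a, fl). (Some (k, f \<circ> ifn A a, fl), [Tm (\<tau> (k (f (ifn A a (init A))))), NT (Some (k, f, fl))])) ` UNIV
 \<union> (\<lambda>(k, f, a, b, e, fl). (Some (k, f \<circ> Cf A a b e, fl),
      [Tm (\<tau> (k (f (Cf A a b e (init A))))), NT (Some (k \<circ> f \<circ> rf A b, e, False)),
       Tm (\<tau> (k (f (rf A b (init A))))), NT (Some (k, f, fl))])) ` UNIV"

lemma PG_nil: "(Some (k, id, fl), []) \<in> PG A \<tau>"
  unfolding PG_def apply (rule UnI1, rule UnI1, rule UnI1) by (rule rev_image_eqI[of "(k, fl)"]) auto

lemma PG_ret: "(Some (k, f \<circ> rf A b, True), [Tm (\<tau> (k (f (rf A b (init A))))), NT (Some (k, f, True))]) \<in> PG A \<tau>"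
  unfolding PG_def apply (rule UnI1, rule UnI1, rule UnI2) by (rule rev_image_eqI[of "(k, f, b)"]) auto

lemma PG_int: "(Some (k, f \<circ> ifn A a, fl), [Tm (\<tau> (k (f (ifn A a (init A))))), NT (Some (k, f, fl))]) \<in> PG A \<tau>"
  unfolding PG_def apply (rule UnI1, rule UnI2) by (rule rev_image_eqI[of "(k, f, a, fl)"]) auto

lemma PG_call: "(Some (k, f \<circ> Cf A a b e, fl),
      [Tm (\<tau> (k (f (Cf A a b e (init A))))), NT (Some (k \<circ> f \<circ> rf A b, e, False)),
       Tm (\<tau> (k (f (rf A b (init A))))), NT (Some (k, f, fl))]) \<in> PG A \<tau>"
  unfolding PG_def apply (rule UnI2) by (rule rev_image_eqI[of "(k, f, a, b, e, fl)"]) auto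

lemma finite_PG:
  fixes A :: "('q::finite, 'g, 'c::finite, 'r::finite, 'i::finite, 'z) vpa_scheme"
  shows "finite (PG A \<tau>)"
  unfolding PG_def by simp

definition LN where "LN A \<tau> k f fl = {sm (out A \<tau> k) w | w. w \<in> (if fl then DD else WW) \<and> FF A w = f}"
definition LXX where "LXX A \<tau> L0 X = (case X of None \<Rightarrow> L0 | Some (k, f, fl) \<Rightarrow> LN A \<tau> k f fl)"

lemma LXX_Some[simp]: "LXX A \<tau> L0 (Some (k, f, fl)) = LN A \<tau> k f fl" by (simp add: LXX_def)
lemma LXX_None[simp]: "LXX A \<tau> L0 None = L0" by (simp add: LXX_def)

lemma Lsem2: "Lsem L [Tm t, NT Y] = (\<lambda>v. t # v) ` L Y" by auto
lemma Lsem4: "Lsem L [Tm t1, NT Y1, Tm t2, NT Y2] = {t1 # u @ t2 # v | u v. u \<in> L Y1 \<and> v \<in> L Y2}"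
  by auto

lemma mem_LN: "w \<in> (if fl then DD else WW) \<Longrightarrow> FF A w = f \<Longrightarrow> sm (out A \<tau> k) w \<in> LN A \<tau> k f fl"
  unfolding LN_def by blast

lemma out_Cons_Ret: "out A \<tau> k (Ret b # d) = \<tau> (k (FF A d (rf A b (init A))))"
  by (simp add: out_def FF_Ret)
lemma out_Cons_Int: "out A \<tau> k (Intl a # d) = \<tau> (k (FF A d (ifn A a (init A))))"
  by (simp add: out_def FF_Int)
lemma out_Call: "x \<in> WW \<Longrightarrow> out A \<tau> k (Call a # x @ Ret b # d) = \<tau> (k (FF A d (Cf A a b (FF A x) (init A))))"
  by (simp add: out_def FF_Call)

lemma sm_Call_full:
  assumes x: "x \<in> WW" and d: "d \<in> DD"
  shows "sm (out A \<tau> k) (Call a # x @ Ret b # d) =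
    \<tau> (k (FF A d (Cf A a b (FF A x) (init A)))) #
    sm (out A \<tau> (k \<circ> FF A d \<circ> rf A b)) x @ \<tau> (k (FF A d (rf A b (init A)))) # sm (out A \<tau> k) d"
  using sm_Call[OF x d, of A \<tau> k b] out_Call[OF x, of A \<tau> k a b d] by simp

lemma PG_sound:
  assumes "(X, r) \<in> PG A \<tau>"
  shows "Lsem (LXX A \<tau> L0) r \<subseteq> LXX A \<tau> L0 X"
  using assms unfolding PG_def
proof (elim UnE imageE)
  fix y assume "y \<in> UNIV" "(X, r) = (case y of (k, fl) \<Rightarrow> (Some (k, id, fl), []))"
  then obtain k fl where "X = Some (k, id, fl)" "r = []" by (cases y) auto
  then show ?thesis using mem_LN[of "[]" fl A id \<tau> k] by (simp add: DD_Nil WW_Nil FF_Nil)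
next
  fix y assume "y \<in> UNIV" "(X, r) = (case y of (k, f, b) \<Rightarrow> (Some (k, f \<circ> rf A b, True), [Tm (\<tau> (k (f (rf A b (init A))))), NT (Some (k, f, True))]))"
  then obtain k f b where X: "X = Some (k, f \<circ> rf A b, True)" and r: "r = [Tm (\<tau> (k (f (rf A b (init A))))), NT (Some (k, f, True))]"
    by (cases y) auto
  show ?thesis
  proof
    fix z assume "z \<in> Lsem (LXX A \<tau> L0) r"
    then obtain d where d: "d \<in> DD" "FF A d = f" and z: "z = \<tau> (k (f (rf A b (init A)))) # sm (out A \<tau> k) d"
      unfolding r Lsem2 by (auto simp: LN_def)
    have "sm (out A \<tau> k) (Ret b # d) \<in> LN A \<tau> k (f \<circ> rf A b) True"
      using mem_LN[of "Ret b # d" True A "f \<circ> rf A b" \<tau> k] d by (simp add: DD_Ret FF_Ret)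
    then show "z \<in> LXX A \<tau> L0 X" using z d X by (simp add: out_Cons_Ret)
  qed
next
  fix y assume "y \<in> UNIV" "(X, r) = (case y of (k, f, a, fl) \<Rightarrow> (Some (k, f \<circ> ifn A a, fl), [Tm (\<tau> (k (f (ifn A a (init A))))), NT (Some (k, f, fl))]))"
  then obtain k f a fl where X: "X = Some (k, f \<circ> ifn A a, fl)" and r: "r = [Tm (\<tau> (k (f (ifn A a (init A))))), NT (Some (k, f, fl))]"
    by (cases y) auto
  show ?thesis
  proof
    fix z assume "z \<in> Lsem (LXX A \<tau> L0) r"
    then obtain d where d: "d \<in> (if fl then DD else WW)" "FF A d = f" and z: "z = \<tau> (k (f (ifn A a (init A)))) # sm (out A \<tau> k) d"
      unfolding r Lsem2 by (auto simp: LN_def)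
    have "Intl a # d \<in> (if fl then DD else WW)" using d by (auto intro: DD_Int WW_Int)
    then have "sm (out A \<tau> k) (Intl a # d) \<in> LN A \<tau> k (f \<circ> ifn A a) fl"
      using mem_LN[of "Intl a # d" fl A "f \<circ> ifn A a" \<tau> k] d by (simp add: FF_Int)
    then show "z \<in> LXX A \<tau> L0 X" using z d X by (simp add: out_Cons_Int)
  qed
next
  fix y assume "y \<in> UNIV" "(X, r) = (case y of (k, f, a, b, e, fl) \<Rightarrow> (Some (k, f \<circ> Cf A a b e, fl),
      [Tm (\<tau> (k (f (Cf A a b e (init A))))), NT (Some (k \<circ> f \<circ> rf A b, e, False)),
       Tm (\<tau> (k (f (rf A b (init A))))), NT (Some (k, f, fl))]))"
  then obtain k f a b e fl where X: "X = Some (k, f \<circ> Cf A a b e, fl)" and r: "r = [Tm (\<tau> (k (f (Cf A a b e (init A))))), NT (Some (k \<circ> f \<circ> rf A b, e, False)),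
       Tm (\<tau> (k (f (rf A b (init A))))), NT (Some (k, f, fl))]"
    by (cases y) auto
  show ?thesis
  proof
    fix z assume "z \<in> Lsem (LXX A \<tau> L0) r"
    then obtain x d where x: "x \<in> WW" "FF A x = e" and d: "d \<in> (if fl then DD else WW)" "FF A d = f" 
      and z: "z = \<tau> (k (f (Cf A a b e (init A)))) # sm (out A \<tau> (k \<circ> f \<circ> rf A b)) x @ \<tau> (k (f (rf A b (init A)))) # sm (out A \<tau> k) d"
      unfolding r Lsem4 by (auto simp: LN_def)
    have dD: "d \<in> DD" using d(1) by (cases fl) (auto intro: WW_DD)
    have "Call a # x @ Ret b # d \<in> (if fl then DD else WW)" using d x by (auto intro: DD_Call WW_Call)
    then have "sm (out A \<tau> k) (Call a # x @ Ret b # d) \<in> LN A \<tau> k (f \<circ> Cf A a b e) fl"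
      using mem_LN[of "Call a # x @ Ret b # d" fl A "f \<circ> Cf A a b e" \<tau> k] d x by (simp add: FF_Call)
    moreover have "z = sm (out A \<tau> k) (Call a # x @ Ret b # d)"
      using z d(2) x(2) by (simp add: sm_Call_full[OF x(1) dD] del: sm.simps)
    ultimately show "z \<in> LXX A \<tau> L0 X" using X by (simp del: sm.simps)
  qed
qed

lemma PG_complete_WW:
  assumes P: "PG A \<tau> \<subseteq> P"
  shows "x \<in> WW \<Longrightarrow> (derive1 P)\<^sup>*\<^sup>* [NT (Some (k, FF A x, False))] (map Tm (sm (out A \<tau> k) x))"
proof (induction x arbitrary: k rule: WW.induct)
  case WW_Nil
  have "(Some (k, id, False), []) \<in> P" by (rule subsetD[OF P PG_nil])
  from rhs0[OF this] show ?case by (simp add: FF_Nil id_def)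
next
  case (WW_Int w a)
  have "(Some (k, FF A w \<circ> ifn A a, False), [Tm (\<tau> (k (FF A w (ifn A a (init A))))), NT (Some (k, FF A w, False))]) \<in> P"
    by (rule subsetD[OF P PG_int])
  from rhs2[OF this WW_Int.IH[of k]] show ?case by (simp add: FF_Int out_Cons_Int comp_def)
next
  case (WW_Call x w a b)
  have "(Some (k, FF A w \<circ> Cf A a b (FF A x), False),
      [Tm (\<tau> (k (FF A w (Cf A a b (FF A x) (init A))))), NT (Some (k \<circ> FF A w \<circ> rf A b, FF A x, False)),
       Tm (\<tau> (k (FF A w (rf A b (init A))))), NT (Some (k, FF A w, False))]) \<in> P"
    by (rule subsetD[OF P PG_call])
  from rhs4[OF this WW_Call.IH(1)[of "k \<circ> FF A w \<circ> rf A b"] WW_Call.IH(2)[of k]] show ?case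
    by (simp add: comp_def FF_Call[OF WW_Call.hyps(1)] sm_Call_full[OF WW_Call.hyps(1) WW_DD[OF WW_Call.hyps(2)]] del: sm.simps)
qed

lemma PG_complete_DD:
  assumes P: "PG A \<tau> \<subseteq> P"
  shows "x \<in> DD \<Longrightarrow> (derive1 P)\<^sup>*\<^sup>* [NT (Some (k, FF A x, True))] (map Tm (sm (out A \<tau> k) x))"
proof (induction x arbitrary: k rule: DD.induct)
  case DD_Nil
  have "(Some (k, id, True), []) \<in> P" by (rule subsetD[OF P PG_nil])
  from rhs0[OF this] show ?case by (simp add: FF_Nil id_def)
next
  case (DD_Ret w b)
  have "(Some (k, FF A w \<circ> rf A b, True), [Tm (\<tau> (k (FF A w (rf A b (init A))))), NT (Some (k, FF A w, True))]) \<in> P"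
    by (rule subsetD[OF P PG_ret])
  from rhs2[OF this DD_Ret.IH[of k]] show ?case by (simp add: FF_Ret out_Cons_Ret comp_def)
next
  case (DD_Int w a)
  have "(Some (k, FF A w \<circ> ifn A a, True), [Tm (\<tau> (k (FF A w (ifn A a (init A))))), NT (Some (k, FF A w, True))]) \<in> P"
    by (rule subsetD[OF P PG_int])
  from rhs2[OF this DD_Int.IH[of k]] show ?case by (simp add: FF_Int out_Cons_Int comp_def)
next
  case (DD_Call x w a b)
  have "(Some (k, FF A w \<circ> Cf A a b (FF A x), True),
      [Tm (\<tau> (k (FF A w (Cf A a b (FF A x) (init A))))), NT (Some (k \<circ> FF A w \<circ> rf A b, FF A x, False)),
       Tm (\<tau> (k (FF A w (rf A b (init A))))), NT (Some (k, FF A w, True))]) \<in> P"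
    by (rule subsetD[OF P PG_call])
  from rhs4[OF this PG_complete_WW[OF P DD_Call.hyps(1), of "k \<circ> FF A w \<circ> rf A b"] DD_Call.IH[of k]] show ?case
    by (simp add: comp_def FF_Call[OF DD_Call.hyps(1)] sm_Call_full[OF DD_Call.hyps(1) DD_Call.hyps(2)] del: sm.simps)
qed

definition gg where "gg A p = snd (rep A ([], p))"

lemma sigma0_DD:
  fixes A :: "('q::linorder, 'g::linorder, 'c, 'r, 'i, 'z) vpa_scheme"
  assumes w: "w \<in> DD"
  shows "sigma0 A w = sm (out A (gg A) id) w"
proof -
  have "sigma0 A w = sm (\<lambda>s. snd (nu A s :: ('g, 'q) conf)) w"
    unfolding sigma0_def by (rule sm_drop)
  also have "\<dots> = sm (out A (gg A) id) w"
    by (rule sm_cong_DD[OF w]) (simp add: nu_def delta_DD out_def gg_def)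
  finally show ?thesis .
qed

lemma sigma1_WW: "x \<in> WW \<Longrightarrow> sigma1 A x = Inr (FF A x) # tl (sm (out A (Inl \<circ> gg A) id) x)"
  by (simp add: sigma1_def phi_WW sigma0_DD[OF WW_DD] map_tl map_sm_out)

lemma S0_cf:
  fixes A :: "('q::{finite,linorder}, 'g::{finite,linorder}, 'c::finite, 'r::finite, 'i::finite) vpa"
  shows "context_free (S0 A)"
proof -
  define P0 :: "('q nt \<times> ('q nt, 'q) gsym list) set"
    where "P0 = PG A (gg A) \<union> range (\<lambda>f. (None, [NT (Some (id, f, True))]))"
  have fin: "finite P0" unfolding P0_def using finite_PG[of A] by simp
  have snd: "\<forall>(X, r) \<in> P0. Lsem (LXX A (gg A) (S0 A)) r \<subseteq> LXX A (gg A) (S0 A) X"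
  proof (clarify)
    fix X r z assume Xr: "(X, r) \<in> P0" and z: "z \<in> Lsem (LXX A (gg A) (S0 A)) r"
    show "z \<in> LXX A (gg A) (S0 A) X"
    proof (cases "(X, r) \<in> PG A (gg A)")
      case True then show ?thesis using PG_sound z by blast
    next
      case False
      then obtain f where X: "X = None" and r: "r = [NT (Some (id, f, True))]" using Xr unfolding P0_def by auto
      from z obtain w where w: "w \<in> DD" "z = sm (out A (gg A) id) w" by (auto simp: r LN_def)
      then have "z = sigma0 A w" by (simp add: sigma0_DD)
      then show ?thesis using w X by (simp add: S0_def DW_DD)
    qed
  qed
  have cmp: "\<forall>w \<in> LXX A (gg A) (S0 A) None. (derive1 P0)\<^sup>*\<^sup>* [NT None] (map Tm w)"
  proof
    fix w assume "w \<in> LXX A (gg A) (S0 A) None"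
    then obtain d where d: "d \<in> DD" "w = sigma0 A d" by (auto simp: S0_def DW_DD)
    have p: "(None, [NT (Some (id, FF A d, True))]) \<in> P0" unfolding P0_def by blast
    have PP: "PG A (gg A) \<subseteq> P0" unfolding P0_def by blast
    from rhs1[OF p PG_complete_DD[OF PP d(1), of id]] show "(derive1 P0)\<^sup>*\<^sup>* [NT None] (map Tm w)"
      using d by (simp add: sigma0_DD)
  qed
  from cf_intro[OF fin snd cmp] show ?thesis by simp
qed

lemma S1_cf:
  fixes A :: "('q::{finite,linorder}, 'g::{finite,linorder}, 'c::finite, 'r::finite, 'i::finite) vpa"
  shows "context_free (S1 A)"
proof -
  define \<tau> :: "'q \<Rightarrow> 'q + ('q \<Rightarrow> 'q)" where "\<tau> = Inl \<circ> gg A"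
  define SI :: "('q nt \<times> ('q nt, 'q + ('q \<Rightarrow> 'q)) gsym list) set"
    where "SI = (\<lambda>(f, a). (None, [Tm (Inr (f \<circ> ifn A a)), NT (Some (id, f, False))])) ` UNIV"
  define SC :: "('q nt \<times> ('q nt, 'q + ('q \<Rightarrow> 'q)) gsym list) set"
    where "SC = (\<lambda>(f, a, b, e). (None, [Tm (Inr (f \<circ> Cf A a b e)), NT (Some (f \<circ> rf A b, e, False)),
        Tm (Inl (gg A (f (rf A b (init A))))), NT (Some (id, f, False))])) ` UNIV"
  define P1 where "P1 = PG A \<tau> \<union> SI \<union> SC"
  have fin: "finite P1" unfolding P1_def SI_def SC_def using finite_PG[of A] by simp
  have snd: "\<forall>(X, r) \<in> P1. Lsem (LXX A \<tau> (S1 A)) r \<subseteq> LXX A \<tau> (S1 A) X"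
  proof (clarify)
    fix X r z assume Xr: "(X, r) \<in> P1" and z: "z \<in> Lsem (LXX A \<tau> (S1 A)) r"
    consider "(X, r) \<in> PG A \<tau>" | "(X, r) \<in> SI" | "(X, r) \<in> SC" using Xr unfolding P1_def by blast
    then show "z \<in> LXX A \<tau> (S1 A) X"
    proof cases
      case 1 then show ?thesis using PG_sound z by blast
    next
      case 2
      then obtain f a where X: "X = None" and r: "r = [Tm (Inr (f \<circ> ifn A a)), NT (Some (id, f, False))]"
        unfolding SI_def by auto
      from z obtain w where w: "w \<in> WW" "FF A w = f" and zz: "z = Inr (f \<circ> ifn A a) # sm (out A \<tau> id) w"
        unfolding r Lsem2 by (auto simp: LN_def)
      have ww: "Intl a # w \<in> WW" using w(1) by (rule WW_Int)
      have "z = sigma1 A (Intl a # w)"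
        using zz w by (simp add: sigma1_WW[OF ww] FF_Int \<tau>_def)
      moreover have "Intl a # w \<in> WM - {[]}" using ww by (simp add: WM_WW)
      ultimately show ?thesis using X by (simp add: S1_def)
    next
      case 3
      then obtain f a b e where X: "X = None" and r: "r = [Tm (Inr (f \<circ> Cf A a b e)), NT (Some (f \<circ> rf A b, e, False)),
        Tm (Inl (gg A (f (rf A b (init A))))), NT (Some (id, f, False))]"
        unfolding SC_def by auto
      from z obtain x d where x: "x \<in> WW" "FF A x = e" and d: "d \<in> WW" "FF A d = f" and
        zz: "z = Inr (f \<circ> Cf A a b e) # sm (out A \<tau> (f \<circ> rf A b)) x @ Inl (gg A (f (rf A b (init A)))) # sm (out A \<tau> id) d"
        unfolding r Lsem4 by (auto simp: LN_def)
      have ww: "Call a # x @ Ret b # d \<in> WW" using x d by (simp add: WW_Call)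
      have "z = sigma1 A (Call a # x @ Ret b # d)"
        using zz x d by (simp add: sigma1_WW[OF ww] FF_Call[OF x(1)] sm_Call_full[OF x(1) WW_DD[OF d(1)]] \<tau>_def del: sm.simps)
      moreover have "Call a # x @ Ret b # d \<in> WM - {[]}" using ww by (simp add: WM_WW)
      ultimately show ?thesis using X by (simp add: S1_def)
    qed
  qed
  have PP: "PG A \<tau> \<subseteq> P1" unfolding P1_def by blast
  have cmp: "\<forall>w \<in> LXX A \<tau> (S1 A) None. (derive1 P1)\<^sup>*\<^sup>* [NT None] (map Tm w)"
  proof
    fix w assume "w \<in> LXX A \<tau> (S1 A) None"
    then obtain y where y: "y \<in> WW" "y \<noteq> []" "w = sigma1 A y" by (auto simp: S1_def WM_WW)
    from y(1,2) show "(derive1 P1)\<^sup>*\<^sup>* [NT None] (map Tm w)"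
    proof cases
      case (WW_Int w' a)
      have p: "(None, [Tm (Inr (FF A w' \<circ> ifn A a)), NT (Some (id, FF A w', False))]) \<in> P1"
        unfolding P1_def SI_def apply (rule UnI1, rule UnI2) by (rule rev_image_eqI[of "(FF A w', a)"]) auto
      from rhs2[OF p PG_complete_WW[OF PP WW_Int(2), of id]] show ?thesis
        using y WW_Int by (simp add: sigma1_WW FF_Int \<tau>_def)
    next
      case (WW_Call x d a b)
      have p: "(None, [Tm (Inr (FF A d \<circ> Cf A a b (FF A x))), NT (Some (FF A d \<circ> rf A b, FF A x, False)),
        Tm (Inl (gg A (FF A d (rf A b (init A))))), NT (Some (id, FF A d, False))]) \<in> P1"
        unfolding P1_def SC_def apply (rule UnI2) by (rule rev_image_eqI[of "(FF A d, a, b, FF A x)"]) auto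
      from rhs4[OF p PG_complete_WW[OF PP WW_Call(2), of "FF A d \<circ> rf A b"] PG_complete_WW[OF PP WW_Call(3), of id]]
      show ?thesis
        using y WW_Call by (simp add: sigma1_WW FF_Call sm_Call_full[OF WW_Call(2) WW_DD[OF WW_Call(3)]] \<tau>_def del: sm.simps)
    qed simp
  qed
  from cf_intro[OF fin snd cmp] show ?thesis by simp
qed

theorem lemma10:
  fixes A :: "('q::{finite,linorder}, 'g::{finite,linorder}, 'c::finite, 'r::finite, 'i::finite) vpa"
  shows "context_free (S0 A) \<and> context_free (S1 A)"
  using S0_cf[of A] S1_cf[of A] by blast

end
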